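(* Let $n,k$ be integers with $0<k\le n$, let $f_j(\Delta_{n,k})$ denote the number of $j$-dimensional faces of the polytope $\Delta_{n,k}$ and $f_j(\Delta'_{n,k})$ the number of $j$-dimensional faces of the half-open hypersimplex $\Delta'_{n,k}$. Then $f_0(\Delta_{n,k})=\binom{n}{k}+\binom{n}{k-1}$, and for $j=1,2,\ldots,n$, $$ f_j(\Delta_{n,k})=f_j(\Delta'_{n,k})+\binom{n}{j+1}\sum_{s=\max\{0,k-1-j\}}^{k-2}\binom{n-j-1}{s}=\binom{n+1}{j+1}\sum_{s=\max\{0,k-j\}}^{k-1}\binom{n-j}{s}. $$
   Context: For integers $0<k\le n$, $\Delta_{n,k}=\{(x_1,\ldots,x_n)\in[0,1]^n : k-1\le x_1+\cdots+x_n\le k\}$ (a convex polytope) and $\Delta'_{n,k}=\{(x_1,\ldots,x_n)\in[0,1]^n : k-1< x_1+\cdots+x_n\le k\}$. A $j$-face of $\Delta'_{n,k}$ is a set $F\cap\Delta'_{n,k}$ where $F$ is a $j$-dimensional face of $\Delta_{n,k}$ with $F\cap\Delta'_{n,k}\neq\emptyset$. Binomial coefficients $\binom{a}{b}$ are $0$ when $b>a$ or $b<0$, and an empty sum is $0$. *)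

theory Defs
  imports "HOL-Analysis.Analysis"
begin

text \<open>Hypersimplex Delta_{n,k} in R^n, with n = CARD('n).\<close>
definition hypersimplex :: "nat \<Rightarrow> (real ^ 'n) set" where
  "hypersimplex k = {x. (\<forall>i. 0 \<le> x $ i \<and> x $ i \<le> 1) \<and>
      real k - 1 \<le> (\<Sum>i\<in>UNIV. x $ i) \<and> (\<Sum>i\<in>UNIV. x $ i) \<le> real k}"

definition half_open_hypersimplex :: "nat \<Rightarrow> (real ^ 'n) set" where
  "half_open_hypersimplex k = {x. (\<forall>i. 0 \<le> x $ i \<and> x $ i \<le> 1) \<and>
      real k - 1 < (\<Sum>i\<in>UNIV. x $ i) \<and> (\<Sum>i\<in>UNIV. x $ i) \<le> real k}"

definition num_faces :: "nat \<Rightarrow> 'a::euclidean_space set \<Rightarrow> nat" where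
  "num_faces j P = card {F. F face_of P \<and> aff_dim F = int j}"

definition half_open_faces :: "nat \<Rightarrow> nat \<Rightarrow> (real ^ 'n) set set" where
  "half_open_faces j k = {G. \<exists>F. F face_of (hypersimplex k :: (real ^ 'n) set) \<and>
       aff_dim F = int j \<and> F \<inter> half_open_hypersimplex k \<noteq> {} \<and>
       G = F \<inter> half_open_hypersimplex k}"

end

theory Submission imports Defs begin

definition ext :: "nat \<Rightarrow> real^'n \<Rightarrow> 'n option \<Rightarrow> real" where
  "ext k x i = (case i of None \<Rightarrow> real k - (\<Sum>j\<in>UNIV. x $ j) | Some j \<Rightarrow> x $ j)"

lemma ext_Some [simp]: "ext k x (Some j) = x $ j" by (simp add: ext_def)
lemma ext_None: "ext k x None = real k - (\<Sum>j\<in>UNIV. x $ j)" by (simp add: ext_def)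

lemma ext_comb:
  assumes "a + b = 1"
  shows "ext k (a *\<^sub>R x + b *\<^sub>R y) i = a * ext k x i + b * ext k y i"
proof (cases i)
  case None
  have "real k = a * real k + b * real k" using assms by (metis distrib_right mult_1)
  then show ?thesis using None
    by (simp add: ext_def sum.distrib sum_distrib_left algebra_simps)
qed simp

lemma UNIV_opt: "(UNIV :: 'n option set) = insert None (range Some)"
  by (simp add: UNIV_option_conv)

lemma sum_opt: "(\<Sum>i\<in>(UNIV::'n::finite option set). f i) = f None + (\<Sum>j\<in>UNIV. f (Some j))"
  by (simp add: UNIV_opt sum.reindex)

lemma card_opt: "card (UNIV :: 'n::finite option set) = Suc CARD('n)"
  by (simp add: UNIV_opt card_image)

lemma ext_sum: "(\<Sum>i\<in>UNIV. ext k (x::real^'n) i) = real k"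
  by (simp add: sum_opt ext_None)

lemma hyp_ext: "hypersimplex k = {x. \<forall>i. 0 \<le> ext k x i \<and> ext k x i \<le> 1}"
  unfolding hypersimplex_def
  apply (auto simp: ext_def split: option.splits)
  done

lemma hoh_ext: "half_open_hypersimplex k = {x \<in> hypersimplex k. ext k x None < 1}"
  unfolding hypersimplex_def half_open_hypersimplex_def
  by (auto simp: ext_def)

definition pt :: "('n option \<Rightarrow> real) \<Rightarrow> real^'n" where
  "pt t = (\<chi> j. t (Some j))"

lemma ext_pt: assumes "(\<Sum>i\<in>UNIV. t i) = real k" shows "ext k (pt t) i = t i"
proof (cases i)
  case None
  then show ?thesis using assms by (simp add: ext_None pt_def sum_opt)
qed (simp add: pt_def)

lemma ext_eq_imp_eq: "(\<And>i. ext k x i = ext k y i) \<Longrightarrow> x = y"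
  by (metis ext_Some vec_eq_iff)

definition Fc :: "nat \<Rightarrow> 'n option set \<Rightarrow> 'n option set \<Rightarrow> (real^'n) set" where
  "Fc k S W = {x \<in> hypersimplex k. (\<forall>i. i \<notin> S \<longrightarrow> i \<notin> W \<longrightarrow> ext k x i = 0) \<and> (\<forall>i\<in>W. ext k x i = 1)}"

definition TO :: "nat \<Rightarrow> (real^'n) set \<Rightarrow> 'n option set" where
  "TO k C = {i. \<forall>x\<in>C. ext k x i = 1}"

definition TS :: "nat \<Rightarrow> (real^'n) set \<Rightarrow> 'n option set" where
  "TS k C = {i. \<not>(\<forall>x\<in>C. ext k x i = 0) \<and> \<not>(\<forall>x\<in>C. ext k x i = 1)}"

lemma hyp_bounds: "x \<in> hypersimplex k \<Longrightarrow> 0 \<le> ext k x i \<and> ext k x i \<le> 1"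
  by (simp add: hyp_ext)

lemma convex_hyp: "convex (hypersimplex k)"
  unfolding convex_def hyp_ext
proof (intro ballI allI impI, safe)
  fix x y :: "real^'a" and u v :: real and i
  assume h: "\<forall>i. 0 \<le> ext k x i \<and> ext k x i \<le> 1" "\<forall>i. 0 \<le> ext k y i \<and> ext k y i \<le> 1"
    "0 \<le> u" "0 \<le> v" "u + v = 1"
  have e: "ext k (u *\<^sub>R x + v *\<^sub>R y) i = u * ext k x i + v * ext k y i" by (rule ext_comb[OF h(5)])
  have "0 \<le> u * ext k x i" "0 \<le> v * ext k y i" using h by auto
  then show "0 \<le> ext k (u *\<^sub>R x + v *\<^sub>R y) i" using e by linarith
  have "u * ext k x i \<le> u" "v * ext k y i \<le> v" using h by (auto intro: mult_left_le)
  then show "ext k (u *\<^sub>R x + v *\<^sub>R y) i \<le> 1" using e h(5) by linarith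
qed

lemma Fc_face: "Fc k S W face_of hypersimplex k"
  unfolding face_of_def
proof (intro conjI ballI impI)
  show "Fc k S W \<subseteq> hypersimplex k" by (auto simp: Fc_def)
  show "convex (Fc k S W)"
    unfolding convex_def
  proof (intro ballI allI impI)
    fix x y and u v :: real
    assume h: "x \<in> Fc k S W" "y \<in> Fc k S W" "0 \<le> u" "0 \<le> v" "u + v = 1"
    have "u *\<^sub>R x + v *\<^sub>R y \<in> hypersimplex k"
      using convex_hyp h unfolding convex_def Fc_def by blast
    then show "u *\<^sub>R x + v *\<^sub>R y \<in> Fc k S W"
      using h by (auto simp: Fc_def ext_comb)
  qed
next
  fix a b x
  assume a: "a \<in> hypersimplex k" and b: "b \<in> hypersimplex k" and x: "x \<in> Fc k S W"
    and seg: "x \<in> open_segment a b"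
  obtain u where u: "0 < u" "u < 1" "x = (1 - u) *\<^sub>R a + u *\<^sub>R b"
    using seg by (auto simp: in_segment)
  have ex: "ext k x i = (1 - u) * ext k a i + u * ext k b i" for i
    using u(3) ext_comb[of "1-u" u k a b i] by simp
  have z: "ext k a i = 0 \<and> ext k b i = 0" if "i \<notin> S" "i \<notin> W" for i
  proof -
    have "ext k x i = 0" using x that by (auto simp: Fc_def)
    moreover have "0 \<le> ext k a i" "0 \<le> ext k b i" using a b hyp_bounds by auto
    moreover have "0 \<le> (1-u) * ext k a i" "0 \<le> u * ext k b i" using calculation u by auto
    ultimately show ?thesis using ex[of i] u
      by (smt (verit) mult_pos_pos)
  qed
  have o: "ext k a i = 1 \<and> ext k b i = 1" if "i \<in> W" for i
  proof -
    have "ext k x i = 1" using x that by (auto simp: Fc_def)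
    moreover have "ext k a i \<le> 1" "ext k b i \<le> 1" using a b hyp_bounds by auto
    moreover have "(1-u) * ext k a i \<le> (1-u)" "u * ext k b i \<le> u" using calculation u by auto
    ultimately show ?thesis using ex[of i] u
      by (smt (verit) mult_le_cancel_left1 mult_le_cancel_left2 mult.commute)
  qed
  show "a \<in> Fc k S W" using a z o by (auto simp: Fc_def)
  show "b \<in> Fc k S W" using b z o by (auto simp: Fc_def)
qed

lemma mid_ext: "ext k ((1/2) *\<^sub>R a + (1/2) *\<^sub>R b) i = (ext k a i + ext k b i) / 2"
  using ext_comb[of "1/2" "1/2" k a b i] by simp

lemma interior_pt_aux:
  assumes C: "convex C" "C \<subseteq> hypersimplex k" "C \<noteq> {}" and U: "finite U"
  shows "\<exists>z\<in>C. \<forall>i\<in>U. (i \<in> TS k C \<longrightarrow> 0 < ext k z i \<and> ext k z i < 1)"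
  using U
proof (induction U rule: finite_induct)
  case empty
  then show ?case using C by auto
next
  case (insert i U)
  then obtain z where z: "z \<in> C" "\<forall>i\<in>U. (i \<in> TS k C \<longrightarrow> 0 < ext k z i \<and> ext k z i < 1)" by blast
  obtain p where p: "p \<in> C" "i \<in> TS k C \<longrightarrow> ext k p i \<noteq> 0"
    using z(1) unfolding TS_def by blast
  obtain q where q: "q \<in> C" "i \<in> TS k C \<longrightarrow> ext k q i \<noteq> 1"
    using z(1) unfolding TS_def by blast
  define z1 where "z1 = (1/2) *\<^sub>R z + (1/2) *\<^sub>R p"
  define z2 where "z2 = (1/2) *\<^sub>R z1 + (1/2) *\<^sub>R q"
  have z1C: "z1 \<in> C" unfolding z1_def using C(1) z(1) p(1) by (simp add: convex_def)
  have z2C: "z2 \<in> C" unfolding z2_def using C(1) z1C q(1) by (simp add: convex_def)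
  have bnd: "\<And>w l. w \<in> C \<Longrightarrow> 0 \<le> ext k w l \<and> ext k w l \<le> 1" using C(2) hyp_bounds by blast
  have e2: "ext k z2 l = (ext k z l + ext k p l) / 4 + ext k q l / 2" for l
    unfolding z2_def z1_def mid_ext by simp
  show ?case
  proof (intro bexI[OF _ z2C] ballI impI)
    fix l assume l: "l \<in> insert i U" "l \<in> TS k C"
    show "0 < ext k z2 l \<and> ext k z2 l < 1"
    proof (cases "l = i")
      case True
      have "ext k p i \<noteq> 0" "ext k q i \<noteq> 1" using p q l True by auto
      moreover have "0 \<le> ext k z i" "0 \<le> ext k p i" "0 \<le> ext k q i"
        "ext k z i \<le> 1" "ext k p i \<le> 1" "ext k q i \<le> 1"
        using bnd[OF z(1)] bnd[OF p(1)] bnd[OF q(1)] by auto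
      ultimately have "0 < ext k p i" "ext k q i < 1" "0 \<le> ext k z i" "ext k z i \<le> 1"
        "ext k p i \<le> 1" "0 \<le> ext k q i" by auto
      moreover have "ext k z2 l = (ext k z i + ext k p i) / 4 + ext k q i / 2" using e2[of i] True by simp
      ultimately show ?thesis by argo
    next
      case False
      then have "l \<in> U" using l by auto
      then have "0 < ext k z l \<and> ext k z l < 1" using z(2) l by auto
      then show ?thesis using e2[of l] bnd[OF p(1), of l] bnd[OF q(1), of l]
        by argo
    qed
  qed
qed

lemma interior_pt:
  assumes "convex C" "C \<subseteq> hypersimplex k" "C \<noteq> {}"
  shows "\<exists>z\<in>C. \<forall>i\<in>TS k C. 0 < ext k z i \<and> ext k z i < 1"
  using interior_pt_aux[OF assms, of UNIV] by auto

lemma pos_lower: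
  assumes "finite A" "\<forall>i\<in>A. 0 < (f i :: real)"
  shows "\<exists>e>0. \<forall>i\<in>A. e \<le> f i"
proof -
  have fin: "finite (insert 1 (f ` A))" using assms by auto
  have "Min (insert 1 (f ` A)) > 0" using assms fin by (auto simp: Min_gr_iff)
  moreover have "\<forall>i\<in>A. Min (insert 1 (f ` A)) \<le> f i" using fin by auto
  ultimately show ?thesis by blast
qed

lemma notTS_notTO: "i \<notin> TS k C \<Longrightarrow> i \<notin> TO k C \<Longrightarrow> x \<in> C \<Longrightarrow> ext k x i = 0"
  unfolding TS_def TO_def by auto

lemma face_char:
  assumes F: "C face_of hypersimplex k" and ne: "C \<noteq> {}"
  shows "C = Fc k (TS k C) (TO k C)"
proof
  have sub: "C \<subseteq> hypersimplex k" and cvx: "convex C" using F by (auto simp: face_of_def)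
  show "C \<subseteq> Fc k (TS k C) (TO k C)"
    using sub notTS_notTO unfolding Fc_def TO_def by blast
  show "Fc k (TS k C) (TO k C) \<subseteq> C"
  proof
    fix y assume y: "y \<in> Fc k (TS k C) (TO k C)"
    have yH: "y \<in> hypersimplex k" using y by (simp add: Fc_def)
    obtain z where z: "z \<in> C" "\<forall>i\<in>TS k C. 0 < ext k z i \<and> ext k z i < 1"
      using interior_pt[OF cvx sub ne] by blast
    obtain e where e: "e > 0" "\<forall>i\<in>TS k C. e \<le> min (ext k z i) (1 - ext k z i)"
      using pos_lower[of "TS k C" "\<lambda>i. min (ext k z i) (1 - ext k z i)"] z(2) by auto
    define w where "w = (1 + e) *\<^sub>R z + (- e) *\<^sub>R y"
    have ew: "ext k w i = (1 + e) * ext k z i - e * ext k y i" for i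
      unfolding w_def using ext_comb[of "1+e" "-e" k z y i] by simp
    have wH: "w \<in> hypersimplex k"
      unfolding hyp_ext mem_Collect_eq
    proof (intro allI)
      fix i
      have yb: "0 \<le> ext k y i" "ext k y i \<le> 1" using hyp_bounds[OF yH] by auto
      show "0 \<le> ext k w i \<and> ext k w i \<le> 1"
      proof (cases "i \<in> TS k C")
        case True
        then have "e \<le> ext k z i" "e \<le> 1 - ext k z i" "0 < ext k z i" "ext k z i < 1" using e z by auto
        moreover have "e * ext k y i \<le> e" "0 \<le> e * ext k y i" using yb e(1) by (auto intro: mult_left_le)
        moreover have "e * ext k z i \<le> e" "0 \<le> e * ext k z i" using calculation e(1)
          by (auto intro: mult_left_le)
        ultimately show ?thesis using ew[of i] by (simp only: ring_distribs) linarith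
      next
        case False
        show ?thesis
        proof (cases "i \<in> TO k C")
          case True
          then have "ext k z i = 1" "ext k y i = 1" using z(1) y by (auto simp: TO_def Fc_def)
          then show ?thesis using ew[of i] by simp
        next
          case F2: False
          then have "ext k z i = 0" "ext k y i = 0" using z(1) y False notTS_notTO
            by (auto simp: Fc_def)
          then show ?thesis using ew[of i] by simp
        qed
      qed
    qed
    show "y \<in> C"
    proof (cases "y = w")
      case True
      then have "(1 + e) *\<^sub>R y = (1 + e) *\<^sub>R z" unfolding w_def by (simp add: algebra_simps)
      then have "y = z" using e(1) by simp
      then show ?thesis using z(1) by simp
    next
      case False
      define u where "u = 1 / (1 + e)"
      have u: "0 < u" "u < 1" using e(1) by (auto simp: u_def)
      have "(1 - u) *\<^sub>R y + u *\<^sub>R w = z"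
      proof -
        have "(1 - u) *\<^sub>R y + u *\<^sub>R w = ((1 - u) - u * e) *\<^sub>R y + (u * (1 + e)) *\<^sub>R z"
          unfolding w_def by (simp add: algebra_simps)
        also have "u * (1 + e) = 1" using e(1) by (simp add: u_def)
        also have "(1 - u) - u * e = 0" using \<open>u * (1 + e) = 1\<close> by (simp add: algebra_simps)
        finally show ?thesis by simp
      qed
      then have "z \<in> open_segment y w" using False u by (auto simp: in_segment)
      then show ?thesis using F yH wH z(1) unfolding face_of_def by blast
    qed
  qed
qed

lemma sum_split3:
  fixes f :: "'n::finite option \<Rightarrow> real"
  assumes "S \<inter> W = {}"
  shows "(\<Sum>i\<in>UNIV. f i) = (\<Sum>i\<in>S. f i) + (\<Sum>i\<in>W. f i) + (\<Sum>i\<in>UNIV - S - W. f i)"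
proof -
  have "(UNIV::'n option set) = S \<union> (W \<union> (UNIV - S - W))" by auto
  then have "(\<Sum>i\<in>UNIV. f i) = (\<Sum>i\<in>S \<union> (W \<union> (UNIV - S - W)). f i)" by simp
  also have "\<dots> = (\<Sum>i\<in>S. f i) + (\<Sum>i\<in>W \<union> (UNIV - S - W). f i)"
    using assms by (intro sum.union_disjoint) auto
  also have "(\<Sum>i\<in>W \<union> (UNIV - S - W). f i) = (\<Sum>i\<in>W. f i) + (\<Sum>i\<in>UNIV - S - W. f i)"
    by (intro sum.union_disjoint) auto
  finally show ?thesis by simp
qed

definition Aff :: "nat \<Rightarrow> 'n option set \<Rightarrow> 'n option set \<Rightarrow> (real^'n) set" where
  "Aff k S W = {x. (\<forall>i. i \<notin> S \<longrightarrow> i \<notin> W \<longrightarrow> ext k x i = 0) \<and> (\<forall>i\<in>W. ext k x i = 1)}"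

lemma Fc_Aff: "Fc k S W = hypersimplex k \<inter> Aff k S W"
  by (auto simp: Fc_def Aff_def)

lemma sum_Aff:
  assumes "S \<inter> W = {}" "x \<in> Aff k S W"
  shows "(\<Sum>i\<in>S. ext k x i) = real k - real (card W)"
proof -
  have "real k = (\<Sum>i\<in>S. ext k x i) + (\<Sum>i\<in>W. ext k x i) + (\<Sum>i\<in>UNIV - S - W. ext k x i)"
    using ext_sum[of k x] sum_split3[OF assms(1)] by metis
  moreover have "(\<Sum>i\<in>W. ext k x i) = real (card W)" using assms(2) by (simp add: Aff_def)
  moreover have "(\<Sum>i\<in>UNIV - S - W. ext k x i) = 0" using assms(2) by (simp add: Aff_def)
  ultimately show ?thesis by simp
qed

lemma recover:
  assumes "S \<inter> W = {}" "z \<in> Fc k S W" "\<forall>i\<in>S. 0 < ext k z i \<and> ext k z i < 1"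
  shows "TO k (Fc k S W) = W" "TS k (Fc k S W) = S"
proof -
  have z0: "ext k z i = 0" if "i \<notin> S" "i \<notin> W" for i using assms(2) that by (auto simp: Fc_def)
  have z1: "ext k z i = 1" if "i \<in> W" for i using assms(2) that by (auto simp: Fc_def)
  show "TO k (Fc k S W) = W"
  proof
    show "W \<subseteq> TO k (Fc k S W)" by (auto simp: TO_def Fc_def)
    show "TO k (Fc k S W) \<subseteq> W"
    proof
      fix i assume "i \<in> TO k (Fc k S W)"
      then have "ext k z i = 1" using assms(2) by (auto simp: TO_def)
      then show "i \<in> W" using assms(3) z0 by force
    qed
  qed
  show "TS k (Fc k S W) = S"
  proof
    show "S \<subseteq> TS k (Fc k S W)"
    proof
      fix i assume i: "i \<in> S"
      then have "ext k z i \<noteq> 0" "ext k z i \<noteq> 1" using assms(3) by auto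
      then show "i \<in> TS k (Fc k S W)" using assms(2) by (auto simp: TS_def)
    qed
    show "TS k (Fc k S W) \<subseteq> S"
    proof
      fix i assume i: "i \<in> TS k (Fc k S W)"
      show "i \<in> S"
      proof (rule ccontr)
        assume "i \<notin> S"
        then have "(\<forall>x\<in>Fc k S W. ext k x i = 0) \<or> (\<forall>x\<in>Fc k S W. ext k x i = 1)"
          by (cases "i \<in> W") (auto simp: Fc_def)
        then show False using i by (auto simp: TS_def)
      qed
    qed
  qed
qed

lemma valid_props:
  assumes "S \<inter> W = {}" "z \<in> Fc k S W" "\<forall>i\<in>S. 0 < ext k z i \<and> ext k z i < 1"
  shows "(S = {} \<longrightarrow> card W = k) \<and> (S \<noteq> {} \<longrightarrow> 0 < real k - real (card W) \<and> real k - real (card W) < real (card S))"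
proof -
  have zA: "z \<in> Aff k S W" using assms(2) by (simp add: Fc_Aff)
  have s: "(\<Sum>i\<in>S. ext k z i) = real k - real (card W)" by (rule sum_Aff[OF assms(1) zA])
  show ?thesis
  proof (intro conjI impI)
    assume "S = {}" then show "card W = k" using s by simp
  next
    assume ne: "S \<noteq> {}"
    have "0 < (\<Sum>i\<in>S. ext k z i)" using ne assms(3) by (intro sum_pos) auto
    then show "0 < real k - real (card W)" using s by simp
  next
    assume ne: "S \<noteq> {}"
    have "(\<Sum>i\<in>S. ext k z i) < (\<Sum>i\<in>S. 1)" using ne assms(3) by (intro sum_strict_mono) auto
    then show "real k - real (card W) < real (card S)" using s by simp
  qed
qed

lemma construct:
  assumes "S \<inter> W = {}" "(S = {} \<and> card W = k) \<or> (S \<noteq> {} \<and> 0 < real k - real (card W) \<and> real k - real (card W) < real (card S))"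
  shows "\<exists>z\<in>Fc k S W. \<forall>i\<in>S. 0 < ext k z i \<and> ext k z i < 1"
proof -
  define r where "r = real k - real (card W)"
  define m where "m = real (card S)"
  define t where "t = (\<lambda>l. if l \<in> W then 1 else if l \<in> S then r / m else (0::real))"
  have st: "(\<Sum>i\<in>UNIV. t i) = real k"
  proof -
    have "(\<Sum>i\<in>UNIV. t i) = (\<Sum>i\<in>S. t i) + (\<Sum>i\<in>W. t i) + (\<Sum>i\<in>UNIV - S - W. t i)"
      by (rule sum_split3[OF assms(1)])
    also have "(\<Sum>i\<in>S. t i) = (\<Sum>i\<in>S. r / m)" using assms(1) by (intro sum.cong) (auto simp: t_def)
    also have "\<dots> = m * (r / m)" by (simp add: m_def)
    also have "(\<Sum>i\<in>W. t i) = real (card W)" by (simp add: t_def)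
    also have "(\<Sum>i\<in>UNIV - S - W. t i) = 0" by (simp add: t_def)
    finally show ?thesis using assms(2) by (auto simp: r_def m_def)
  qed
  have e0: "ext k (pt t) i = t i" for i by (rule ext_pt[OF st])
  have e: "ext k (pt t) i = (if i \<in> W then 1 else if i \<in> S then r / m else (0::real))" for i
    using e0[of i] by (simp add: t_def)
  have rm0: "S \<noteq> {} \<Longrightarrow> 0 < r / m \<and> r / m < 1" using assms(2) by (auto simp: r_def m_def)
  have rm: "i \<in> S \<Longrightarrow> 0 < r / m \<and> r / m < 1" for i using rm0 by blast
  have "pt t \<in> Fc k S W"
    unfolding Fc_def hyp_ext using assms(1) by (auto simp: e dest!: rm)
  moreover have "\<forall>i\<in>S. 0 < ext k (pt t) i \<and> ext k (pt t) i < 1"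
    using rm assms(1) by (auto simp: e)
  ultimately show ?thesis by blast
qed

lemma affine_Aff: "affine (Aff k S W)"
  unfolding affine_def Aff_def by (auto simp: ext_comb)

lemma affine_ext0: "affine {x. ext k x i = (0::real)}"
  unfolding affine_def by (auto simp: ext_comb)

lemma ext_diff_bound:
  "\<bar>ext k x i - ext k z i\<bar> \<le> real CARD('n) * norm (x - z)" for x z :: "real^'n"
proof (cases i)
  case None
  have "\<bar>ext k x i - ext k z i\<bar> = \<bar>\<Sum>j\<in>UNIV. (x - z) $ j\<bar>"
    using None by (simp add: ext_None sum_subtractf)
  also have "\<dots> \<le> (\<Sum>j\<in>UNIV. \<bar>(x - z) $ j\<bar>)" by (rule sum_abs)
  also have "\<dots> \<le> (\<Sum>j\<in>(UNIV::'n set). norm (x - z))" by (intro sum_mono component_le_norm_cart)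
  finally show ?thesis by simp
next
  case (Some j)
  have "\<bar>ext k x i - ext k z i\<bar> = \<bar>(x - z) $ j\<bar>" using Some by simp
  also have "\<dots> \<le> norm (x - z)" by (rule component_le_norm_cart)
  also have "\<dots> \<le> real CARD('n) * norm (x - z)"
  proof -
    have "(1::real) \<le> real CARD('n)" using zero_less_card_finite[where 'a='n] by linarith
    from mult_right_mono[OF this norm_ge_zero[of "x - z"]] show ?thesis by simp
  qed
  finally show ?thesis .
qed

lemma aff_dim_Fc:
  assumes SW: "S \<inter> W = {}" and Sne: "S \<noteq> {}" and z: "z \<in> Fc k S W"
    and zi: "\<forall>i\<in>S. 0 < ext k z i \<and> ext k z i < 1"
  shows "aff_dim (Fc k S W) = int (card S) - 1"
proof -
  define A where "A = Aff k S W"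
  define r where "r = real k - real (card W)"
  have zA: "z \<in> A" using z by (simp add: A_def Fc_Aff)
  have r: "0 < r" using valid_props[OF SW z zi] Sne by (simp add: r_def)
  define t where "t = (\<lambda>i l. if l \<in> W then 1 else if l = i then r else (0::real))"
  define p where "p = (\<lambda>i. pt (t i))"
  have st: "(\<Sum>l\<in>UNIV. t i l) = real k" if "i \<in> S" for i
  proof -
    have "(\<Sum>l\<in>UNIV. t i l) = (\<Sum>l\<in>W. t i l) + (\<Sum>l\<in>UNIV - W. t i l)"
      using sum.subset_diff[of W UNIV "t i"] by (simp add: add.commute)
    also have "(\<Sum>l\<in>W. t i l) = real (card W)" by (simp add: t_def)
    also have "(\<Sum>l\<in>UNIV - W. t i l) = (\<Sum>l\<in>UNIV - W. if l = i then r else 0)"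
      by (intro sum.cong) (auto simp: t_def)
    also have "\<dots> = r" using that SW by (subst sum.delta) auto
    finally show ?thesis by (simp add: r_def)
  qed
  have ep: "ext k (p i) l = (if l \<in> W then 1 else if l = i then r else 0)" if "i \<in> S" for i l
    using ext_pt[OF st[OF that]] by (simp add: p_def t_def)
  have epj: "p i $ j = (if Some j \<in> W then 1 else if Some j = i then r else 0)" if "i \<in> S" for i j
    using ep[OF that, of "Some j"] by simp
  have pA: "p i \<in> A" if "i \<in> S" for i using ep[OF that] that SW by (auto simp: A_def Aff_def)
  have inj: "inj_on p S"
  proof (rule inj_onI)
    fix i i' assume "i \<in> S" "i' \<in> S" "p i = p i'"
    then have "ext k (p i) i = ext k (p i') i" by simp
    then show "i = i'" using ep \<open>i \<in> S\<close> \<open>i' \<in> S\<close> SW r by (auto split: if_splits)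
  qed
  define P where "P = p ` S"
  have finP: "finite P" by (simp add: P_def)
  have indep: "\<not> affine_dependent P"
  proof
    assume "affine_dependent P"
    then obtain x where x: "x \<in> P" "x \<in> affine hull (P - {x})" by (auto simp: affine_dependent_def)
    then obtain i where i: "i \<in> S" "x = p i" by (auto simp: P_def)
    have "P - {x} \<subseteq> {y. ext k y i = 0}"
    proof
      fix y assume "y \<in> P - {x}"
      then obtain i' where "i' \<in> S" "y = p i'" "i' \<noteq> i" using i by (auto simp: P_def)
      then show "y \<in> {y. ext k y i = 0}" using ep[of i' i] i SW by auto
    qed
    then have "affine hull (P - {x}) \<subseteq> {y. ext k y i = 0}"
      by (intro hull_minimal affine_ext0)
    then have "ext k x i = 0" using x by auto
    moreover have "i \<notin> W" using i SW by auto
    ultimately show False using ep[OF i(1), of i] i r by auto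
  qed
  have cardP: "card P = card S" using inj by (simp add: P_def card_image)
  have adP: "aff_dim P = int (card S) - 1"
    using aff_dim_affine_independent[OF indep] cardP by simp
  have hullA: "affine hull P = A"
  proof
    show "affine hull P \<subseteq> A" using pA unfolding P_def
      by (intro hull_minimal) (auto simp: A_def affine_Aff)
    show "A \<subseteq> affine hull P"
    proof
      fix x assume xA: "x \<in> A"
      have sx: "(\<Sum>i\<in>S. ext k x i) = r" using sum_Aff[OF SW] xA by (simp add: A_def r_def)
      define u where "u = (\<lambda>v. ext k x (inv_into S p v) / r)"
      have u_p: "u (p i) = ext k x i / r" if "i \<in> S" for i
        using inv_into_f_f[OF inj that] by (simp add: u_def)
      have "sum u P = (\<Sum>i\<in>S. u (p i))" unfolding P_def using sum.reindex[OF inj, of u] by simp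
      also have "\<dots> = (\<Sum>i\<in>S. ext k x i / r)" by (intro sum.cong) (auto simp: u_p)
      also have "\<dots> = 1" using r sx by (simp add: sum_divide_distrib[symmetric])
      finally have su: "sum u P = 1" .
      have "(\<Sum>v\<in>P. u v *\<^sub>R v) = (\<Sum>i\<in>S. u (p i) *\<^sub>R p i)"
        unfolding P_def using sum.reindex[OF inj, of "\<lambda>v. u v *\<^sub>R v"] by simp
      also have "\<dots> = (\<Sum>i\<in>S. (ext k x i / r) *\<^sub>R p i)" by (intro sum.cong) (auto simp: u_p)
      also have "\<dots> = x"
      proof (subst vec_eq_iff, intro allI)
        fix j
        have comp: "(\<Sum>i\<in>S. (ext k x i / r) *\<^sub>R p i) $ j = (\<Sum>i\<in>S. (ext k x i / r) * (p i $ j))"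
          by simp
        show "(\<Sum>i\<in>S. (ext k x i / r) *\<^sub>R p i) $ j = x $ j"
        proof (cases "Some j \<in> W")
          case True
          then have "(\<Sum>i\<in>S. (ext k x i / r) * (p i $ j)) = (\<Sum>i\<in>S. ext k x i / r)"
            by (intro sum.cong) (auto simp: epj)
          also have "\<dots> = 1" using r sx by (simp add: sum_divide_distrib[symmetric])
          also have "\<dots> = x $ j" using xA True by (auto simp: A_def Aff_def)
          finally show ?thesis using comp by simp
        next
          case False
          then have "(\<Sum>i\<in>S. (ext k x i / r) * (p i $ j))
              = (\<Sum>i\<in>S. if i = Some j then ext k x i else 0)"
            using r by (intro sum.cong) (auto simp: epj)
          also have "\<dots> = (if Some j \<in> S then ext k x (Some j) else 0)"
            by (simp add: sum.delta')
          also have "\<dots> = x $ j" using xA False by (auto simp: A_def Aff_def)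
          finally show ?thesis using comp by simp
        qed
      qed
      finally show "x \<in> affine hull P" using su finP by (auto simp: affine_hull_finite)
    qed
  qed
  have adA: "aff_dim A = int (card S) - 1" using adP hullA by (metis aff_dim_affine_hull)
  have le: "aff_dim (Fc k S W) \<le> aff_dim A"
    by (rule aff_dim_subset) (simp add: A_def Fc_Aff)
  obtain e where e: "e > 0" "\<forall>i\<in>S. e \<le> min (ext k z i) (1 - ext k z i)"
    using pos_lower[of S "\<lambda>i. min (ext k z i) (1 - ext k z i)"] zi by auto
  define c where "c = real CARD('a)"
  have c: "c > 0" by (simp add: c_def)
  have ball_sub: "A \<inter> ball z (e / c) \<subseteq> Fc k S W"
  proof
    fix x assume x: "x \<in> A \<inter> ball z (e / c)"
    have "norm (x - z) < e / c" using x by (auto simp: dist_norm norm_minus_commute)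
    then have nx: "c * norm (x - z) < e" using c by (simp add: field_simps)
    have bd: "\<bar>ext k x i - ext k z i\<bar> < e" for i
      using ext_diff_bound[of k x i z] nx by (simp add: c_def)
    have "x \<in> hypersimplex k"
      unfolding hyp_ext mem_Collect_eq
    proof
      fix i
      show "0 \<le> ext k x i \<and> ext k x i \<le> 1"
      proof (cases "i \<in> S")
        case True
        then have "e \<le> ext k z i" "e \<le> 1 - ext k z i" using e by auto
        then show ?thesis using bd[of i] by linarith
      next
        case False
        then show ?thesis using x by (cases "i \<in> W") (auto simp: A_def Aff_def)
      qed
    qed
    then show "x \<in> Fc k S W" using x by (simp add: Fc_Aff A_def)
  qed
  have "aff_dim (A \<inter> ball z (e / c)) = aff_dim A"
    using zA e c by (intro aff_dim_convex_Int_open) (auto simp: A_def affine_Aff affine_imp_convex)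
  then have ge: "aff_dim A \<le> aff_dim (Fc k S W)" using aff_dim_subset[OF ball_sub] by simp
  show ?thesis using le ge adA by simp
qed

lemma Fc_empty_single: "x \<in> Fc k {} W \<Longrightarrow> y \<in> Fc k {} W \<Longrightarrow> x = y"
  by (rule ext_eq_imp_eq[of k], simp add: Fc_def) (metis)

lemma TS_TO_disj: "TS k C \<inter> TO k C = {}"
  by (auto simp: TS_def TO_def)

lemma canon:
  assumes F: "F face_of hypersimplex k" and ne: "F \<noteq> {}"
  obtains z where "F = Fc k (TS k F) (TO k F)" "z \<in> F" "\<forall>i\<in>TS k F. 0 < ext k z i \<and> ext k z i < 1"
proof -
  have "convex F" "F \<subseteq> hypersimplex k" using F by (auto simp: face_of_def)
  then obtain z where "z \<in> F" "\<forall>i\<in>TS k F. 0 < ext k z i \<and> ext k z i < 1"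
    using interior_pt ne by blast
  then show ?thesis using that face_char[OF F ne] by blast
qed

definition E :: "nat \<Rightarrow> nat \<Rightarrow> ('n option set \<times> 'n option set) set" where
  "E j k = {(S, W). S \<inter> W = {} \<and> card S = j + 1 \<and> 0 < real k - real (card W) \<and> real k - real (card W) < real (card S)}"

lemma aff_dim_face_cases:
  assumes F: "F face_of hypersimplex k" and ne: "F \<noteq> {}"
  shows "(TS k F = {} \<and> card (TO k F) = k \<and> aff_dim F = 0) \<or>
         (TS k F \<noteq> {} \<and> 0 < real k - real (card (TO k F)) \<and> real k - real (card (TO k F)) < real (card (TS k F))
           \<and> aff_dim F = int (card (TS k F)) - 1)"
proof -
  obtain z where Fe: "F = Fc k (TS k F) (TO k F)" and z: "z \<in> F"
    and zi: "\<forall>i\<in>TS k F. 0 < ext k z i \<and> ext k z i < 1"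
    using canon[OF F ne] by blast
  have zF: "z \<in> Fc k (TS k F) (TO k F)" using z Fe by simp
  note vp = valid_props[OF TS_TO_disj zF zi]
  show ?thesis
  proof (cases "TS k F = {}")
    case True
    then have "F = {z}" using Fe z Fc_empty_single[of _ k "TO k F"] by (metis (no_types, lifting) empty_iff insertI1 subsetI subset_antisym singleton_iff)
    then show ?thesis using True vp by simp
  next
    case False
    have "aff_dim F = int (card (TS k F)) - 1"
      using aff_dim_Fc[OF TS_TO_disj False zF zi] Fe by simp
    then show ?thesis using False vp by simp
  qed
qed

lemma jfaces:
  assumes j: "1 \<le> j"
  shows "{F. F face_of (hypersimplex k :: (real^'n) set) \<and> aff_dim F = int j} = (\<lambda>(S,W). Fc k S W) ` E j k"
    and "inj_on (\<lambda>(S,W). Fc k S W :: (real^'n) set) (E j k)"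
proof -
  show "{F. F face_of (hypersimplex k :: (real^'n) set) \<and> aff_dim F = int j} = (\<lambda>(S,W). Fc k S W) ` E j k"
  proof
    show "{F. F face_of (hypersimplex k :: (real^'n) set) \<and> aff_dim F = int j} \<subseteq> (\<lambda>(S,W). Fc k S W) ` E j k"
    proof
      fix F :: "(real^'n) set" assume "F \<in> {F. F face_of hypersimplex k \<and> aff_dim F = int j}"
      then have F: "F face_of hypersimplex k" and ad: "aff_dim F = int j" by auto
      have ne: "F \<noteq> {}" using ad by auto
      have Fe: "F = Fc k (TS k F) (TO k F)" using face_char[OF F ne] .
      from aff_dim_face_cases[OF F ne] j ad
      have "(TS k F, TO k F) \<in> E j k" using TS_TO_disj by (auto simp: E_def)
      then show "F \<in> (\<lambda>(S,W). Fc k S W) ` E j k" using Fe by force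
    qed
    show "(\<lambda>(S,W). Fc k S W) ` E j k \<subseteq> {F. F face_of (hypersimplex k :: (real^'n) set) \<and> aff_dim F = int j}"
    proof clarify
      fix S W :: "'n option set" assume "(S, W) \<in> E j k"
      then have SW: "S \<inter> W = {}" and cS: "card S = j + 1" and r: "0 < real k - real (card W)"
        "real k - real (card W) < real (card S)" by (auto simp: E_def)
      have Sne: "S \<noteq> {}" using cS by auto
      obtain z where z: "z \<in> Fc k S W" "\<forall>i\<in>S. 0 < ext k z i \<and> ext k z i < 1"
        using construct[OF SW] Sne r by blast
      show "Fc k S W face_of hypersimplex k \<and> aff_dim (Fc k S W) = int j"
        using Fc_face aff_dim_Fc[OF SW Sne z] cS by simp
    qed
  qed
  show "inj_on (\<lambda>(S,W). Fc k S W :: (real^'n) set) (E j k)"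
  proof (rule inj_onI, clarify)
    fix S W S' W' :: "'n option set"
    assume a: "(S, W) \<in> E j k" "(S', W') \<in> E j k" and eq: "Fc k S W = (Fc k S' W' :: (real^'n) set)"
    have g: "TO k (Fc k S W :: (real^'n) set) = W \<and> TS k (Fc k S W :: (real^'n) set) = S"
      if "(S, W) \<in> E j k" for S W
    proof -
      from that have SW: "S \<inter> W = {}" and cS: "card S = j + 1" and r: "0 < real k - real (card W)"
        "real k - real (card W) < real (card S)" by (auto simp: E_def)
      have Sne: "S \<noteq> {}" using cS by auto
      obtain z :: "real^'n" where z: "z \<in> Fc k S W" "\<forall>i\<in>S. 0 < ext k z i \<and> ext k z i < 1"
        using construct[OF SW] Sne r by blast
      show ?thesis using recover[OF SW z] by simp
    qed
    show "S = S' \<and> W = W'" using g[OF a(1)] g[OF a(2)] eq by metis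
  qed
qed

lemma vfaces:
  shows "{F. F face_of (hypersimplex k :: (real^'n) set) \<and> aff_dim F = 0} = (\<lambda>W. Fc k {} W) ` {W. card W = k}"
    and "inj_on (\<lambda>W. Fc k {} W :: (real^'n) set) {W. card W = k}"
proof -
  show "{F. F face_of (hypersimplex k :: (real^'n) set) \<and> aff_dim F = 0} = (\<lambda>W. Fc k {} W) ` {W. card W = k}"
  proof
    show "{F. F face_of (hypersimplex k :: (real^'n) set) \<and> aff_dim F = 0} \<subseteq> (\<lambda>W. Fc k {} W) ` {W. card W = k}"
    proof
      fix F :: "(real^'n) set" assume "F \<in> {F. F face_of hypersimplex k \<and> aff_dim F = 0}"
      then have F: "F face_of hypersimplex k" and ad: "aff_dim F = 0" by auto
      have ne: "F \<noteq> {}" using ad by auto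
      have Fe: "F = Fc k (TS k F) (TO k F)" using face_char[OF F ne] .
      have c: "TS k F = {} \<and> card (TO k F) = k"
      proof (rule ccontr)
        assume "\<not> ?thesis"
        then have "TS k F \<noteq> {}" "0 < real k - real (card (TO k F))"
          "real k - real (card (TO k F)) < real (card (TS k F))" "card (TS k F) = 1"
          using aff_dim_face_cases[OF F ne] ad by auto
        then have "real (card (TO k F)) < real k" "real k < real (card (TO k F) + 1)" by auto
        then have "card (TO k F) < k" "k < card (TO k F) + 1" by (simp_all only: of_nat_less_iff)
        then show False by linarith
      qed
      then show "F \<in> (\<lambda>W. Fc k {} W) ` {W. card W = k}" using Fe by force
    qed
    show "(\<lambda>W. Fc k {} W) ` {W. card W = k} \<subseteq> {F. F face_of (hypersimplex k :: (real^'n) set) \<and> aff_dim F = 0}"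
    proof
      fix F assume "F \<in> (\<lambda>W. Fc k {} W :: (real^'n) set) ` {W. card W = k}"
      then obtain W :: "'n option set" where cW: "card W = k" and FW: "F = Fc k {} W" by auto
      obtain z :: "real^'n" where z: "z \<in> Fc k {} W"
        using construct[of "{}" W k] cW by auto
      have eq: "Fc k {} W = {z}" using z Fc_empty_single by blast
      show "F \<in> {F. F face_of (hypersimplex k :: (real^'n) set) \<and> aff_dim F = 0}"
        unfolding FW mem_Collect_eq
      proof
        show "(Fc k {} W :: (real^'n) set) face_of hypersimplex k" by (rule Fc_face)
        show "aff_dim (Fc k {} W :: (real^'n) set) = 0" using eq by simp
      qed
    qed
  qed
  show "inj_on (\<lambda>W. Fc k {} W :: (real^'n) set) {W. card W = k}"
  proof (rule inj_onI)
    fix W W' :: "'n option set"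
    assume a: "W \<in> {W. card W = k}" "W' \<in> {W. card W = k}" and eq: "Fc k {} W = (Fc k {} W' :: (real^'n) set)"
    have g: "TO k (Fc k {} W :: (real^'n) set) = W" if cw: "card W = k" for W :: "'n option set"
    proof -
      obtain z :: "real^'n" where z: "z \<in> Fc k {} W"
        using construct[of "{}" W k] cw by auto
      show ?thesis using recover(1)[of "{}" W z k] z by simp
    qed
    show "W = W'" using g[of W] g[of W'] a eq by (metis mem_Collect_eq)
  qed
qed

lemma count_sub: "finite X \<Longrightarrow> finite R \<Longrightarrow> card {W. W \<subseteq> X \<and> card W \<in> R} = (\<Sum>b\<in>R. card X choose b)"
proof -
  assume X: "finite X" and R: "finite R"
  have eq: "{W. W \<subseteq> X \<and> card W \<in> R} = (\<Union>b\<in>R. {W. W \<subseteq> X \<and> card W = b})" by auto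
  have "card (\<Union>b\<in>R. {W. W \<subseteq> X \<and> card W = b}) = (\<Sum>b\<in>R. card {W. W \<subseteq> X \<and> card W = b})"
    using X R by (intro card_UN_disjoint) (auto intro: finite_subset[of _ "Pow X"])
  also have "\<dots> = (\<Sum>b\<in>R. card X choose b)" using X by (simp add: n_subsets)
  finally show ?thesis using eq by simp
qed

lemma count_pairs:
  assumes U: "finite U" and R: "finite R"
  shows "card {(S,W). S \<subseteq> U \<and> W \<subseteq> U \<and> S \<inter> W = {} \<and> card S = a \<and> card W \<in> R}
       = (card U choose a) * (\<Sum>b\<in>R. (card U - a) choose b)"
proof -
  have eq: "{(S,W). S \<subseteq> U \<and> W \<subseteq> U \<and> S \<inter> W = {} \<and> card S = a \<and> card W \<in> R}
      = Sigma {S. S \<subseteq> U \<and> card S = a} (\<lambda>S. {W. W \<subseteq> U - S \<and> card W \<in> R})" by auto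
  have "card (Sigma {S. S \<subseteq> U \<and> card S = a} (\<lambda>S. {W. W \<subseteq> U - S \<and> card W \<in> R}))
      = (\<Sum>S\<in>{S. S \<subseteq> U \<and> card S = a}. card {W. W \<subseteq> U - S \<and> card W \<in> R})"
    using U by (intro card_SigmaI) (auto intro: finite_subset[of _ "Pow U"])
  also have "\<dots> = (\<Sum>S\<in>{S. S \<subseteq> U \<and> card S = a}. (\<Sum>b\<in>R. (card U - a) choose b))"
  proof (intro sum.cong refl)
    fix S assume "S \<in> {S. S \<subseteq> U \<and> card S = a}"
    then have "card (U - S) = card U - a" using U by (auto simp: card_Diff_subset finite_subset)
    then show "card {W. W \<subseteq> U - S \<and> card W \<in> R} = (\<Sum>b\<in>R. (card U - a) choose b)"
      using count_sub[of "U - S" R] U R by simp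
  qed
  also have "\<dots> = (card U choose a) * (\<Sum>b\<in>R. (card U - a) choose b)"
    using U by (simp add: n_subsets)
  finally show ?thesis using eq by simp
qed

lemma hoh_empty_iff:
  assumes "F \<subseteq> hypersimplex k"
  shows "F \<inter> half_open_hypersimplex k = {} \<longleftrightarrow> None \<in> TO k F"
proof
  assume "F \<inter> half_open_hypersimplex k = {}"
  then have "\<forall>x\<in>F. ext k x None = 1" using assms hyp_bounds[of _ k None] by (force simp: hoh_ext)
  then show "None \<in> TO k F" by (simp add: TO_def)
next
  assume "None \<in> TO k F"
  then show "F \<inter> half_open_hypersimplex k = {}" by (auto simp: TO_def hoh_ext)
qed

lemma hoh_inj:
  "inj_on (\<lambda>F. F \<inter> half_open_hypersimplex k)
     {F. F face_of (hypersimplex k :: (real^'n) set) \<and> F \<inter> half_open_hypersimplex k \<noteq> {}}"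
proof -
  have key: "F \<subseteq> F'" if F: "F face_of hypersimplex k" and F': "F' face_of (hypersimplex k :: (real^'n) set)"
    and ne: "F \<inter> half_open_hypersimplex k \<noteq> {}"
    and eq: "F \<inter> half_open_hypersimplex k = F' \<inter> half_open_hypersimplex k" for F F'
  proof
    fix y assume y: "y \<in> F"
    obtain z where z: "z \<in> F" "z \<in> half_open_hypersimplex k" using ne by auto
    have yH: "y \<in> hypersimplex k" and zH: "z \<in> hypersimplex k"
      using y z F by (auto simp: face_of_def)
    show "y \<in> F'"
    proof (cases "y = z")
      case True then show ?thesis using z eq by auto
    next
      case False
      define m where "m = (1/2) *\<^sub>R y + (1/2) *\<^sub>R z"
      have mF: "m \<in> F" using F y z(1) unfolding m_def face_of_def convex_def by auto
      have "ext k m None < 1" using mid_ext[of k y z None] hyp_bounds[OF yH, of None] z(2)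
        by (auto simp: m_def hoh_ext)
      then have "m \<in> half_open_hypersimplex k" using mF F by (auto simp: hoh_ext face_of_def)
      then have mF': "m \<in> F'" using mF eq by auto
      have "m \<in> open_segment y z" using False unfolding in_segment m_def
        by (intro conjI exI[of _ "1/2"]) auto
      then show ?thesis using F' mF' yH zH unfolding face_of_def by blast
    qed
  qed
  show ?thesis
  proof (rule inj_onI)
    fix F F' assume a: "F \<in> {F. F face_of (hypersimplex k :: (real^'n) set) \<and> F \<inter> half_open_hypersimplex k \<noteq> {}}"
      "F' \<in> {F. F face_of (hypersimplex k :: (real^'n) set) \<and> F \<inter> half_open_hypersimplex k \<noteq> {}}"
      and eq: "F \<inter> half_open_hypersimplex k = F' \<inter> half_open_hypersimplex k"
    show "F = F'"
    proof (rule subset_antisym)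
      show "F \<subseteq> F'" using a eq by (intro key) auto
      show "F' \<subseteq> F" using a eq by (intro key) auto
    qed
  qed
qed

lemma TO_E:
  assumes "(S, W) \<in> E j k"
  shows "TO k (Fc k S W :: (real^'n) set) = W"
proof -
  from assms have SW: "S \<inter> W = {}" and cS: "card S = j + 1" and r: "0 < real k - real (card W)"
    "real k - real (card W) < real (card S)" by (auto simp: E_def)
  have Sne: "S \<noteq> {}" using cS by auto
  obtain z :: "real^'n" where z: "z \<in> Fc k S W" "\<forall>i\<in>S. 0 < ext k z i \<and> ext k z i < 1"
    using construct[OF SW] Sne r by blast
  show ?thesis using recover[OF SW z] by simp
qed

lemma E_alt: "E j k = {(S,W). S \<subseteq> UNIV \<and> W \<subseteq> UNIV \<and> S \<inter> W = {} \<and> card S = j + 1 \<and> card W \<in> {b. b < k \<and> k < b + j + 1}}"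
  unfolding E_def by auto

lemma card_E: "card (E j k :: ('n::finite option set \<times> _) set) = (Suc CARD('n) choose (j + 1)) * (\<Sum>b\<in>{b. b < k \<and> k < b + j + 1}. (Suc CARD('n) - (j + 1)) choose b)"
  unfolding E_alt using count_pairs[of "UNIV :: 'n option set" "{b. b < k \<and> k < b + j + 1}" "j+1"]
  by (simp add: card_opt)

lemma card_E_None: "card {p \<in> (E j k :: ('n::finite option set \<times> _) set). None \<in> snd p}
   = (CARD('n) choose (j + 1)) * (\<Sum>b\<in>{b. b + 1 < k \<and> k < b + 1 + j + 1}. (CARD('n) - (j + 1)) choose b)"
proof -
  define U where "U = (range Some :: 'n option set)"
  define R where "R = {b. b + 1 < k \<and> k < b + 1 + j + 1}"
  define P where "P = {(S,W). S \<subseteq> U \<and> W \<subseteq> U \<and> S \<inter> W = {} \<and> card S = j + 1 \<and> card W \<in> R}"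
  have cU: "card U = CARD('n)" by (simp add: U_def card_image)
  have finR: "finite R" unfolding R_def by (rule finite_subset[of _ "{..<k}"]) auto
  have cP: "card P = (CARD('n) choose (j + 1)) * (\<Sum>b\<in>R. (CARD('n) - (j + 1)) choose b)"
    unfolding P_def using count_pairs[of U R "j+1"] finR cU by simp
  define g where "g = (\<lambda>(S, W). (S, insert None W) :: 'n option set \<times> 'n option set)"
  have NU: "None \<notin> U" by (simp add: U_def)
  have img: "{p \<in> (E j k :: ('n option set \<times> _) set). None \<in> snd p} = g ` P"
  proof
    show "g ` P \<subseteq> {p \<in> E j k. None \<in> snd p}"
    proof
      fix p assume "p \<in> g ` P"
      then obtain S W where SW: "(S, W) \<in> P" "p = (S, insert None W)" by (auto simp: g_def)
      have "None \<notin> W" "None \<notin> S" using SW NU by (auto simp: P_def)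
      moreover have "finite W" by simp
      ultimately have "card (insert None W) = card W + 1" by simp
      moreover have "S \<inter> W = {}" "card S = j + 1" "card W + 1 < k" "k < card W + 1 + j + 1"
        using SW(1) unfolding P_def R_def by auto
      ultimately have "S \<inter> insert None W = {}" "card S = j + 1" "card (insert None W) < k"
        "k < card (insert None W) + j + 1" using \<open>None \<notin> S\<close> by auto
      then show "p \<in> {p \<in> E j k. None \<in> snd p}"
        unfolding E_alt using SW(2) by simp
    qed
    show "{p \<in> E j k. None \<in> snd p} \<subseteq> g ` P"
    proof
      fix p :: "'n option set \<times> 'n option set" assume p: "p \<in> {p \<in> E j k. None \<in> snd p}"
      obtain S W where pSW: "p = (S, W)" by (cases p)
      have SW: "S \<inter> W = {}" "card S = j + 1" "card W < k" "k < card W + j + 1" "None \<in> W"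
        using p pSW by (auto simp: E_alt)
      have fW: "finite W" by simp
      have cW: "card W = card (W - {None}) + 1" using card_Suc_Diff1[OF fW SW(5)] by simp
      have "S \<subseteq> U" using SW(1,5) unfolding U_def by (metis Int_iff disjoint_iff not_None_eq rangeI subsetI)
      moreover have "W - {None} \<subseteq> U" unfolding U_def by (metis Diff_iff not_None_eq rangeI singletonI subsetI)
      moreover have "S \<inter> (W - {None}) = {}" using SW(1) by blast
      moreover have "card (W - {None}) \<in> R" using SW(3,4) cW unfolding R_def by simp
      ultimately have "(S, W - {None}) \<in> P" using SW(2) unfolding P_def by simp
      moreover have "p = g (S, W - {None})" using pSW SW(5) by (auto simp: g_def)
      ultimately show "p \<in> g ` P" by blast
    qed
  qed
  have inj: "inj_on g P"
  proof (rule inj_onI)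
    fix x y assume xy: "x \<in> P" "y \<in> P" "g x = g y"
    obtain S W where x: "x = (S, W)" by (cases x)
    obtain S' W' where y: "y = (S', W')" by (cases y)
    have "None \<notin> W" "None \<notin> W'" using xy x y NU unfolding P_def by auto
    moreover have "S = S'" "insert None W = insert None W'" using xy(3) x y by (simp_all add: g_def)
    ultimately have "W = W'" by (metis Diff_insert_absorb)
    then show "x = y" using x y \<open>S = S'\<close> by simp
  qed
  show ?thesis using img card_image[OF inj] cP by (simp add: R_def)
qed



lemma sum_conv:
  assumes "0 \<le> lo"
  shows "(\<Sum>s\<in>{lo..hi::int}. f (nat s)) = (\<Sum>b\<in>nat ` {lo..hi}. f b)"
proof -
  have "inj_on nat {lo..hi}" using assms by (auto simp: inj_on_def)
  then show ?thesis by (simp add: sum.reindex)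
qed

lemma R1_eq: "{b. b < k \<and> k < b + j + 1} = nat ` {max 0 (int k - int j) .. int k - 1}"
proof
  show "{b. b < k \<and> k < b + j + 1} \<subseteq> nat ` {max 0 (int k - int j) .. int k - 1}"
  proof
    fix b assume "b \<in> {b. b < k \<and> k < b + j + 1}"
    then have "int b \<in> {max 0 (int k - int j) .. int k - 1}" by auto
    then show "b \<in> nat ` {max 0 (int k - int j) .. int k - 1}" by (metis image_eqI nat_int)
  qed
  show "nat ` {max 0 (int k - int j) .. int k - 1} \<subseteq> {b. b < k \<and> k < b + j + 1}"
    by auto
qed

lemma R2_eq: "{b. b + 1 < k \<and> k < b + 1 + j + 1} = nat ` {max 0 (int k - 1 - int j) .. int k - 2}"
proof
  show "{b. b + 1 < k \<and> k < b + 1 + j + 1} \<subseteq> nat ` {max 0 (int k - 1 - int j) .. int k - 2}"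
  proof
    fix b assume "b \<in> {b. b + 1 < k \<and> k < b + 1 + j + 1}"
    then have "int b \<in> {max 0 (int k - 1 - int j) .. int k - 2}" by auto
    then show "b \<in> nat ` {max 0 (int k - 1 - int j) .. int k - 2}" by (metis image_eqI nat_int)
  qed
  show "nat ` {max 0 (int k - 1 - int j) .. int k - 2} \<subseteq> {b. b + 1 < k \<and> k < b + 1 + j + 1}"
    by auto
qed

theorem corollary1p4:
  fixes k :: nat
  assumes "0 < k" and "k \<le> CARD('n::finite)"
  shows "num_faces 0 (hypersimplex k :: (real ^ 'n) set) = (CARD('n) choose k) + (CARD('n) choose (k - 1))
     \<and> (\<forall>j\<in>{1..CARD('n)}.
          num_faces j (hypersimplex k :: (real ^ 'n) set)
            = card (half_open_faces j k :: (real ^ 'n) set set)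
              + (CARD('n) choose (j + 1)) *
                (\<Sum>s\<in>{max 0 (int k - 1 - int j) .. int k - 2}. (CARD('n) - j - 1) choose nat s)
        \<and> num_faces j (hypersimplex k :: (real ^ 'n) set)
            = ((CARD('n) + 1) choose (j + 1)) *
                (\<Sum>s\<in>{max 0 (int k - int j) .. int k - 1}. (CARD('n) - j) choose nat s))"
proof (intro conjI ballI)
  define n where "n = CARD('n)"
  have "num_faces 0 (hypersimplex k :: (real ^ 'n) set) = card {W :: 'n option set. card W = k}"
  proof -
    have e: "{F. F face_of (hypersimplex k :: (real ^ 'n) set) \<and> aff_dim F = int 0}
       = (\<lambda>W. Fc k {} W :: (real^'n) set) ` {W. card W = k}" using vfaces(1)[of k, where 'n='n] by simp
    show ?thesis unfolding num_faces_def e by (rule card_image[OF vfaces(2)])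
  qed
  also have "\<dots> = card {W :: 'n option set. W \<subseteq> UNIV \<and> card W = k}" by simp
  also have "\<dots> = Suc n choose k" using n_subsets[of "UNIV :: 'n option set" k] by (simp add: card_opt n_def)
  also have "\<dots> = (n choose k) + (n choose (k - 1))"
    using assms(1) by (cases k) (simp_all add: add.commute)
  finally show "num_faces 0 (hypersimplex k :: (real ^ 'n) set) = (CARD('n) choose k) + (CARD('n) choose (k - 1))"
    by (simp add: n_def)
next
  fix j assume j: "j \<in> {1..CARD('n)}"
  then have j1: "1 \<le> j" by simp
  define JF where "JF = {F. F face_of (hypersimplex k :: (real^'n) set) \<and> aff_dim F = int j}"
  define H where "H = (half_open_hypersimplex k :: (real^'n) set)"
  define Fc' where "Fc' = (\<lambda>(S,W). Fc k S W :: (real^'n) set)"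
  have JFe: "JF = Fc' ` E j k" and inj: "inj_on Fc' (E j k)"
    using jfaces[OF j1, of k, where 'n='n] by (simp_all add: JF_def Fc'_def)
  have finE: "finite (E j k :: ('n option set \<times> _) set)"
    by (rule finite_subset[of _ "UNIV"]) auto
  have nf: "num_faces j (hypersimplex k :: (real ^ 'n) set) = card (E j k :: ('n option set \<times> _) set)"
    unfolding num_faces_def JF_def[symmetric] JFe using card_image[OF inj] .
  show "num_faces j (hypersimplex k :: (real ^ 'n) set)
            = ((CARD('n) + 1) choose (j + 1)) *
                (\<Sum>s\<in>{max 0 (int k - int j) .. int k - 1}. (CARD('n) - j) choose nat s)"
  proof -
    have "(\<Sum>b\<in>{b. b < k \<and> k < b + j + 1}. (Suc CARD('n) - (j + 1)) choose b)
        = (\<Sum>s\<in>{max 0 (int k - int j) .. int k - 1}. (CARD('n) - j) choose nat s)"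
      unfolding R1_eq by (subst sum_conv) simp_all
    then show ?thesis unfolding nf card_E by simp
  qed
  define A where "A = {F \<in> JF. F \<inter> H \<noteq> {}}"
  define B where "B = {F \<in> JF. F \<inter> H = {}}"
  have finJF: "finite JF" using JFe finE by simp
  have cJF: "card JF = card A + card B"
  proof -
    have "JF = A \<union> B" "A \<inter> B = {}" by (auto simp: A_def B_def)
    moreover have "finite A" "finite B" using finJF by (auto simp: A_def B_def)
    ultimately show ?thesis using card_Un_disjoint[of A B] by simp
  qed
  have hof: "half_open_faces j k = (\<lambda>F. F \<inter> H) ` A"
    unfolding half_open_faces_def A_def JF_def H_def by blast
  have hi: "inj_on (\<lambda>F. F \<inter> H) {F. F face_of (hypersimplex k :: (real^'n) set) \<and> F \<inter> H \<noteq> {}}"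
    unfolding H_def by (rule hoh_inj)
  have "inj_on (\<lambda>F. F \<inter> H) A"
    by (rule inj_on_subset[OF hi]) (auto simp: A_def JF_def)
  then have cA: "card (half_open_faces j k :: (real ^ 'n) set set) = card A" using hof card_image by metis
  have Be: "B = Fc' ` {p \<in> E j k. None \<in> snd p}"
  proof
    show "B \<subseteq> Fc' ` {p \<in> E j k. None \<in> snd p}"
    proof
      fix F assume F: "F \<in> B"
      then obtain S W where SW: "(S, W) \<in> E j k" "F = Fc k S W"
        unfolding B_def JFe Fc'_def by auto
      have "F \<inter> H = {}" using F by (simp add: B_def)
      then have "None \<in> TO k F" using hoh_empty_iff[of F k] Fc_face[of k S W] SW(2)
        unfolding H_def face_of_def by blast
      then have "None \<in> W" using TO_E[OF SW(1)] SW(2) by simp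
      then show "F \<in> Fc' ` {p \<in> E j k. None \<in> snd p}" using SW unfolding Fc'_def by force
    qed
    show "Fc' ` {p \<in> E j k. None \<in> snd p} \<subseteq> B"
    proof
      fix F assume "F \<in> Fc' ` {p \<in> E j k. None \<in> snd p}"
      then obtain S W where SW: "(S, W) \<in> E j k" "None \<in> W" "F = Fc k S W"
        unfolding Fc'_def by auto
      have "None \<in> TO k F" using TO_E[OF SW(1)] SW by simp
      then have "F \<inter> H = {}" using hoh_empty_iff[of F k] Fc_face[of k S W] SW(3)
        unfolding H_def face_of_def by blast
      moreover have "F \<in> JF" using SW JFe unfolding Fc'_def by force
      ultimately show "F \<in> B" by (simp add: B_def)
    qed
  qed
  have "inj_on Fc' {p \<in> E j k. None \<in> snd p}" by (rule inj_on_subset[OF inj]) auto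
  then have cB: "card B = card {p \<in> (E j k :: ('n option set \<times> _) set). None \<in> snd p}"
    using Be card_image by metis
  show "num_faces j (hypersimplex k :: (real ^ 'n) set)
            = card (half_open_faces j k :: (real ^ 'n) set set)
              + (CARD('n) choose (j + 1)) *
                (\<Sum>s\<in>{max 0 (int k - 1 - int j) .. int k - 2}. (CARD('n) - j - 1) choose nat s)"
  proof -
    have "(\<Sum>b\<in>{b. b + 1 < k \<and> k < b + 1 + j + 1}. (CARD('n) - (j + 1)) choose b)
        = (\<Sum>s\<in>{max 0 (int k - 1 - int j) .. int k - 2}. (CARD('n) - j - 1) choose nat s)"
      unfolding R2_eq by (subst sum_conv) simp_all
    then show ?thesis unfolding num_faces_def JF_def[symmetric] cJF cA cB card_E_None by simp
  qed
qed

end
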